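(* With $V=V(z,1)$, $u_1=u_1(z)=1/(1-V(z,1))$ and \[ Q(z)=\frac{V(z,1)^2}{u_1(z)-1}-\frac{u_1(z)B(z,1,1)}{u_1(z)-1}+z\,u_1(z), \] the partial derivatives of $B$ satisfy \[ B_x(z,1,1)=\frac{u_1(z)-1}{u_1(z)}\,Q(z)\big(1-Q(z)\big),\qquad B_z(z,1,1)=\frac{u_1(z)-1}{z\,u_1(z)}\,Q(z)\big(1-Q(z)\big)+u_1(z)-1 . \]
   Context: $B(z,x,u)$ is the generating function of rooted 2-connected planar maps (no cut vertex; loops and multiple edges allowed) excluding the single-edge and single-loop maps, with $z$ marking edges, $x$ non-root faces and $u$ the root face valency; explicitly \[ B=-\tfrac12\big(1-(1+U-V+UV-2U^2V)u+U(1-V)^2u^2\big)+\tfrac12\big(1-(1-V)u\big)\sqrt{1-2U(1+V-2UV)u+U^2(1-V)^2u^2}, \] where $U=U(z,x)$, $V=V(z,x)$ are the power series determined by $z=U(1-V)^2$, $xz=V(1-U)^2$. $B_x,B_z$ are partial derivatives. *)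

theory Defs
  imports "HOL-Computational_Algebra.Polynomial"
          "HOL-Computational_Algebra.Formal_Laurent_Series"
begin

text \<open>Bivariate power series in z and x are represented as power series in z whose
  coefficients are real polynomials in x (type real poly fps).
  The variable x is the polynomial [:0,1:].\<close>

type_synonym bser = "real poly fps"

definition xvar :: bser where "xvar = fps_const [:0, 1:]"

definition UV_system :: "bser \<Rightarrow> bser \<Rightarrow> bool" where
  "UV_system U V \<longleftrightarrow> U $ 0 = 0 \<and> V $ 0 = 0 \<and>
     fps_X = U * (1 - V)^2 \<and> xvar * fps_X = V * (1 - U)^2"

definition ser_sqrt :: "bser \<Rightarrow> bser" where
  "ser_sqrt D = (THE S. S^2 = D \<and> S $ 0 = 1)"

text \<open>B(z,x,u) for a fixed real value u of the root-face variable.\<close>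
definition Bser :: "bser \<Rightarrow> bser \<Rightarrow> real \<Rightarrow> bser" where
  "Bser U V u = (let c = (\<lambda>r::real. fps_const [:r:]) in
     - fps_const [:1/2:] * (1 - (1 + U - V + U*V - 2*U^2*V) * c u + U * (1 - V)^2 * c u ^ 2)
     + fps_const [:1/2:] * (1 - (1 - V) * c u) *
         ser_sqrt (1 - 2 * U * (1 + V - 2*U*V) * c u + U^2 * (1 - V)^2 * c u ^ 2))"

definition dx :: "bser \<Rightarrow> bser" where "dx F = Abs_fps (\<lambda>n. pderiv (F $ n))"

definition dz :: "bser \<Rightarrow> bser" where "dz F = fps_deriv F"

text \<open>Specialisation x = 1, yielding a univariate series in z, viewed as a Laurent series
  (so that division is exact).\<close>
definition at_x1 :: "bser \<Rightarrow> real fls" where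
  "at_x1 F = fps_to_fls (Abs_fps (\<lambda>n. poly (F $ n) 1))"

end

theory Submission
  imports Defs
begin

definition ev :: "bser \<Rightarrow> real fps" where "ev F = Abs_fps (\<lambda>n. poly (F $ n) 1)"

lemma at_x1_ev: "at_x1 F = fps_to_fls (ev F)"
  by (simp add: at_x1_def ev_def)

lemma ev_nth[simp]: "ev F $ n = poly (F $ n) 1" by (simp add: ev_def)

lemma ev_add[simp]: "ev (F + G) = ev F + ev G" by (rule fps_ext) simp
lemma ev_diff[simp]: "ev (F - G) = ev F - ev G" by (rule fps_ext) simp
lemma ev_uminus[simp]: "ev (- F) = - ev F" by (rule fps_ext) simp
lemma ev_mult[simp]: "ev (F * G) = ev F * ev G"
  by (rule fps_ext) (simp add: fps_mult_nth poly_sum)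
lemma ev_one[simp]: "ev 1 = 1" by (rule fps_ext) simp
lemma ev_zero[simp]: "ev 0 = 0" by (rule fps_ext) simp
lemma ev_X[simp]: "ev fps_X = fps_X" by (rule fps_ext) (simp add: fps_X_nth)
lemma ev_xvar[simp]: "ev xvar = 1" by (rule fps_ext) (simp add: xvar_def)
lemma ev_const[simp]: "ev (fps_const c) = fps_const (poly c 1)"
  by (rule fps_ext) simp
lemma ev_numeral[simp]: "ev (numeral n) = numeral n"
  by (simp add: numeral_fps_const)
lemma ev_of_nat[simp]: "ev (of_nat n) = of_nat n"
  by (induction n) (simp_all add: of_nat_Suc)
lemma ev_power[simp]: "ev (F ^ n) = ev F ^ n" by (induction n) auto
lemma ev_deriv[simp]: "ev (fps_deriv F) = fps_deriv (ev F)"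
  by (rule fps_ext) (simp add: of_nat_poly)

lemma pderiv_sum': "pderiv (\<Sum>i\<in>A. f i) = (\<Sum>i\<in>A. pderiv (f i))"
  by (induction A rule: infinite_finite_induct) (auto simp: pderiv_add)

lemma dx_add[simp]: "dx (F + G) = dx F + dx G" by (rule fps_ext) (simp add: dx_def pderiv_add)
lemma dx_diff[simp]: "dx (F - G) = dx F - dx G" by (rule fps_ext) (simp add: dx_def pderiv_diff)
lemma dx_uminus[simp]: "dx (- F) = - dx F" by (rule fps_ext) (simp add: dx_def pderiv_minus)
lemma dx_mult[simp]: "dx (F * G) = dx F * G + F * dx G"
proof (rule fps_ext)
  fix n
  have "dx (F * G) $ n = (\<Sum>i=0..n. pderiv (F $ i) * G $ (n - i) + F $ i * pderiv (G $ (n - i)))"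
    by (simp add: dx_def fps_mult_nth pderiv_sum' pderiv_mult mult.commute add.commute)
  also have "\<dots> = (dx F * G + F * dx G) $ n"
    by (simp add: dx_def fps_mult_nth sum.distrib)
  finally show "dx (F * G) $ n = (dx F * G + F * dx G) $ n" .
qed
lemma dx_one[simp]: "dx 1 = 0" by (rule fps_ext) (simp add: dx_def)
lemma dx_X[simp]: "dx fps_X = 0" by (rule fps_ext) (simp add: dx_def fps_X_nth)
lemma dx_xvar[simp]: "dx xvar = 1" by (rule fps_ext) (simp add: dx_def xvar_def pderiv_pCons)
lemma dx_const[simp]: "dx (fps_const c) = fps_const (pderiv c)"
  by (rule fps_ext) (simp add: dx_def)
lemma dx_numeral[simp]: "dx (numeral n) = 0"
  by (simp add: numeral_fps_const numeral_poly pderiv_pCons)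
lemma dx_power2[simp]: "dx (F ^ 2) = 2 * F * dx F"
  by (simp add: power2_eq_square algebra_simps)

lemma ser_sqrt_eq:
  assumes "S^2 = D" "S $ 0 = 1"
  shows "ser_sqrt D = S"
  unfolding ser_sqrt_def
proof (rule the_equality)
  show "S^2 = D \<and> S $ 0 = 1" using assms by simp
next
  fix T assume T: "T^2 = D \<and> T $ 0 = 1"
  have "(T - S) * (T + S) = 0"
    using T assms by (simp add: algebra_simps power2_eq_square)
  moreover have "T + S \<noteq> 0"
  proof
    assume "T + S = 0"
    hence "(T + S) $ 0 = 0" by simp
    hence "(2::real poly) = 0" using T assms by (simp add: one_add_one)
    thus False by (metis one_add_one one_neq_zero poly_1 poly_add zero_poly.rep_eq add_0 coeff_0 coeff_1 one_add_one zero_neq_numeral numeral_One)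
  qed
  ultimately show "T = S" by simp
qed

lemma Bser1:
  assumes "UV_system U V"
  shows "Bser U V 1 = U * V * (1 - U - V)"
proof -
  have U0: "U $ 0 = 0" using assms by (simp add: UV_system_def)
  have c1: "fps_const [:1::real:] = 1" by (simp add: one_pCons[symmetric])
  have sq: "ser_sqrt (1 - 2 * U * (1 + V - 2*U*V) * 1 + U^2 * (1 - V)^2 * 1 ^ 2) = 1 - U - U * V"
    by (rule ser_sqrt_eq) (simp_all add: U0 power2_eq_square algebra_simps)
  have h: "fps_const [:1/2::real:] * 2 = 1"
  proof -
    have a: "(2::real poly fps) = fps_const [:2:]"
      by (metis numeral_fps_const numeral_poly)
    have b: "[:1/2::real:] * [:2:] = 1" by simp
    show ?thesis by (simp only: a fps_const_mult b) simp
  qed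
  have alg: "\<And>h::bser. - h * (1 - (1 + U - V + U * V - 2 * U\<^sup>2 * V) * 1 + U * (1 - V)\<^sup>2 * 1\<^sup>2) +
      h * (1 - (1 - V) * 1) * (1 - U - U * V) = (h * 2) * (U * V * (1 - U - V))"
    by (simp add: algebra_simps power2_eq_square)
  show ?thesis
    unfolding Bser_def Let_def c1 sq
  proof -
    have "- fps_const [:1 / 2:] * (1 - (1 + U - V + U * V - 2 * U\<^sup>2 * V) * 1 + U * (1 - V)\<^sup>2 * 1\<^sup>2) +
      fps_const [:1 / 2:] * (1 - (1 - V) * 1) * (1 - U - U * V)
      = (fps_const [:1/2::real:] * 2) * (U * V * (1 - U - V))"
      using alg[of "fps_const [:1/2::real:]"] by simp
    thus "- fps_const [:1 / 2:] * (1 - (1 + U - V + U * V - 2 * U\<^sup>2 * V) * 1 + U * (1 - V)\<^sup>2 * 1\<^sup>2) +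
      fps_const [:1 / 2:] * (1 - (1 - V) * 1) * (1 - U - U * V) = U * V * (1 - U - V)"
      using h by simp
  qed
qed

lemma fls_final:
  fixes w bx bz b x :: "real fls"
  assumes w0: "w \<noteq> 0" and a0: "1 - w \<noteq> 0" and x0: "x \<noteq> 0"
    and F1: "bx * (1 - w) = w * x" and F2: "bz * (1 - w) = 2 * w"
    and F3: "b = w^2 * (1 - 2*w)" and F4: "x = w * (1 - w)^2"
  defines "u1 \<equiv> 1 / (1 - w)"
  defines "Q \<equiv> w^2 / (u1 - 1) - u1 * b / (u1 - 1) + x * u1"
  shows "bx = (u1 - 1) / u1 * Q * (1 - Q) \<and> bz = (u1 - 1) / (x * u1) * Q * (1 - Q) + u1 - 1"
proof -
  have u1m: "u1 - 1 = w / (1 - w)" using a0 by (simp add: u1_def field_simps)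
  have Q: "Q = w"
  proof -
    have 1: "w^2 / (u1 - 1) = w * (1 - w)" unfolding u1m using w0 a0 by (simp add: field_simps power2_eq_square)
    have 2: "u1 * b / (u1 - 1) = w * (1 - 2*w)" unfolding u1m F3 using w0 a0
      by (simp add: u1_def field_simps power2_eq_square)
    have 3: "x * u1 = w * (1 - w)" unfolding F4 u1_def using a0 by (simp add: field_simps power2_eq_square)
    show ?thesis unfolding Q_def 1 2 3 by (simp add: algebra_simps)
  qed
  have bx: "bx = w * x / (1 - w)" using F1 a0 by (simp add: field_simps)
  have bz: "bz = 2 * w / (1 - w)" using F2 a0 by (simp add: field_simps)
  have 4: "(u1 - 1) / u1 = w" unfolding u1m using a0 by (simp add: u1_def field_simps)
  have xu: "x * u1 = w * (1 - w)" unfolding F4 u1_def using a0 by (simp add: field_simps power2_eq_square)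
  have g: "\<And>c::real fls. c \<noteq> 0 \<Longrightarrow> (w / c) / (w * c) = 1 / c^2" using w0
    by (simp add: field_simps power2_eq_square)
  have 5: "(u1 - 1) / (x * u1) = 1 / (1 - w)^2" unfolding u1m xu using g[OF a0] .
  have G1: "\<And>c::real fls. c \<noteq> 0 \<Longrightarrow> w * (w * c^2) / c = w * w * c"
    by (simp add: field_simps power2_eq_square)
  have G2: "\<And>c::real fls. c \<noteq> 0 \<Longrightarrow> 2 * (1 - c) / c = 1 / c^2 * (1 - c) * c + 1 / c - 1"
    by (simp add: field_simps power2_eq_square)
  show ?thesis unfolding Q 4 5 bx bz unfolding F4 u1_def
    using G1[OF a0] G2[OF a0] by simp
qed

theorem lemma4p2:
  fixes U V :: bser
  assumes "UV_system U V"
  defines "u1 \<equiv> 1 / (1 - at_x1 V)"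
  defines "Q \<equiv> (at_x1 V)^2 / (u1 - 1) - u1 * at_x1 (Bser U V 1) / (u1 - 1) + fls_X * u1"
  shows "at_x1 (dx (Bser U V 1)) = (u1 - 1) / u1 * Q * (1 - Q) \<and>
         at_x1 (dz (Bser U V 1)) = (u1 - 1) / (fls_X * u1) * Q * (1 - Q) + u1 - 1"
proof -
  have U0: "U $ 0 = 0" and V0: "V $ 0 = 0" and eq1: "fps_X = U * (1 - V)^2"
    and eq2: "xvar * fps_X = V * (1 - U)^2" using assms(1) by (auto simp: UV_system_def)
  define W where "W = ev U"
  have W0: "W $ 0 = 0" using U0 by (simp add: W_def)
  have e1: "fps_X = W * (1 - ev V)^2" using arg_cong[OF eq1, of ev] by (simp add: W_def)
  have e2: "fps_X = ev V * (1 - W)^2" using arg_cong[OF eq2, of ev] by (simp add: W_def)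
  have VW: "ev V = W"
  proof -
    have "(W - ev V) * (1 - W * ev V) = 0"
      using e1 e2 by (simp add: algebra_simps power2_eq_square)
    moreover have "1 - W * ev V \<noteq> 0"
    proof
      assume "1 - W * ev V = 0"
      hence "(1 - W * ev V) $ 0 = 0" by simp
      thus False using W0 by simp
    qed
    ultimately show ?thesis by simp
  qed
  have X: "fps_X = W * (1 - W)^2" using e2 VW by simp
  have Wn0: "W \<noteq> 0" using X by auto
  have an0: "1 - W \<noteq> 0"
  proof
    assume "1 - W = 0"
    hence "(1 - W) $ 0 = 0" by simp
    thus False using W0 by simp
  qed
  define p where "p = fps_deriv W"
  define r where "r = ev (dx U)"
  define s where "s = ev (dx V)"
  have dVW: "fps_deriv (ev V) = p" using VW p_def by simp
  have z1: "1 = p * (1 - W)^2 - 2 * W * (1 - W) * p"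
    using arg_cong[OF eq1, of "\<lambda>F. ev (fps_deriv F)"] VW
    by (simp add: W_def[symmetric] p_def algebra_simps power2_eq_square)
  have x1: "0 = r * (1 - W)^2 - 2 * W * (1 - W) * s"
    using arg_cong[OF eq1, of "\<lambda>F. ev (dx F)"] VW
    by (simp add: W_def[symmetric] r_def s_def algebra_simps power2_eq_square)
  have x2: "fps_X = s * (1 - W)^2 - 2 * W * (1 - W) * r"
    using arg_cong[OF eq2, of "\<lambda>F. ev (dx F)"] VW
    by (simp add: W_def[symmetric] r_def s_def algebra_simps power2_eq_square)
  have B1: "Bser U V 1 = U * V * (1 - U - V)" by (rule Bser1[OF assms(1)])
  have Bev: "ev (Bser U V 1) = W^2 * (1 - 2*W)" unfolding B1 using VW
    by (simp add: W_def[symmetric] algebra_simps power2_eq_square)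
  have Bx: "ev (dx (Bser U V 1)) = W * (1 - 3*W) * (r + s)" unfolding B1 using VW
    by (simp add: W_def[symmetric] r_def[symmetric] s_def[symmetric] algebra_simps power2_eq_square)
  have Bz: "ev (dz (Bser U V 1)) = W * (1 - 3*W) * (2*p)" unfolding B1 dz_def using VW dVW
    by (simp add: W_def[symmetric] p_def[symmetric] algebra_simps power2_eq_square)
  have F1: "ev (dx (Bser U V 1)) * (1 - W) = W * fps_X"
  proof -
    have "ev (dx (Bser U V 1)) * (1 - W) - W * fps_X = W * ((r * (1 - W)^2 - 2 * W * (1 - W) * s)
       + (s * (1 - W)^2 - 2 * W * (1 - W) * r) - fps_X)"
      unfolding Bx by (simp add: algebra_simps power2_eq_square)
    thus ?thesis using x1 x2 by simp
  qed
  have F2: "ev (dz (Bser U V 1)) * (1 - W) = 2 * W"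
  proof -
    have "ev (dz (Bser U V 1)) * (1 - W) - 2 * W = 2 * W * ((p * (1 - W)^2 - 2 * W * (1 - W) * p) - 1)"
      unfolding Bz by (simp add: algebra_simps power2_eq_square)
    thus ?thesis using z1 by simp
  qed
  have f1: "at_x1 (dx (Bser U V 1)) * (1 - fps_to_fls W) = fps_to_fls W * fls_X"
    using arg_cong[OF F1, of fps_to_fls] by (simp add: at_x1_ev fls_times_fps_to_fls)
  have f2: "at_x1 (dz (Bser U V 1)) * (1 - fps_to_fls W) = 2 * fps_to_fls W"
    using arg_cong[OF F2, of fps_to_fls] by (simp add: at_x1_ev fls_times_fps_to_fls)
  have f3: "at_x1 (Bser U V 1) = (fps_to_fls W)^2 * (1 - 2 * fps_to_fls W)"
    using arg_cong[OF Bev, of fps_to_fls] by (simp add: at_x1_ev fls_times_fps_to_fls fps_to_fls_power)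
  have f4: "fls_X = fps_to_fls W * (1 - fps_to_fls W)^2"
    using arg_cong[OF X, of fps_to_fls] by (simp add: fls_times_fps_to_fls fps_to_fls_power)
  have aV: "at_x1 V = fps_to_fls W" by (simp add: at_x1_ev VW)
  have w0: "fps_to_fls W \<noteq> 0" using Wn0 by simp
  have a0: "1 - fps_to_fls W \<noteq> 0"
  proof
    assume "1 - fps_to_fls W = 0"
    hence "fps_to_fls (1 - W) = 0" by simp
    thus False using an0 by simp
  qed
  have x0: "(fls_X :: real fls) \<noteq> 0" by simp
  show ?thesis unfolding Q_def u1_def aV
    by (rule fls_final[OF w0 a0 x0 f1 f2 f3 f4])
qed

end
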